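(* Let $a=(a_1,a_2)\in(0,\infty)^2$ and $t=(t_1,t_2)$ with $1<t_1<t_2$, and let $$A_0:=\frac{\sqrt3}{2}\left(\frac{a_2t_2(t_2-1)S_1(t_2+2)}{a_1t_1(t_1-1)S_1(t_1+2)}\right)^{\frac1{t_2-t_1}}.$$ Then: (1) if $0<A<A_0$, $(1/2,\sqrt3/2)$ is a strict local minimizer of $(x,y)\mapsto E_{V^{LJ}_{a,t}}(x,y,A)$; (2) if $A>A_0$, $(1/2,\sqrt3/2)$ is a strict local maximizer of $(x,y)\mapsto E_{V^{LJ}_{a,t}}(x,y,A)$.
   Context: $V^{LJ}_{a,t}(r)=\frac{a_2}{r^{t_2}}-\frac{a_1}{r^{t_1}}$ for $r>0$. For $A>0$, $x\in\mathbb R$, $y>0$, $E_{f}(x,y,A)=\sum_{m,n} f\left(A\left[\frac1y(m+xn)^2+yn^2\right]\right)$, where $\sum_{m,n}$ denotes summation over all $(m,n)\in\mathbb Z^2\setminus\{(0,0)\}$. $S_1(s)=\sum_{m,n}\frac{m^4}{(m^2+mn+n^2)^s}$. *)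

theory Defs
  imports "HOL-Analysis.Analysis"
begin

definition V_LJ :: "real \<Rightarrow> real \<Rightarrow> real \<Rightarrow> real \<Rightarrow> real \<Rightarrow> real" where
  "V_LJ a1 a2 t1 t2 r = a2 / (r powr t2) - a1 / (r powr t1)"

definition Zstar :: "(int \<times> int) set" where
  "Zstar = UNIV - {(0, 0)}"

definition E_lat :: "(real \<Rightarrow> real) \<Rightarrow> real \<Rightarrow> real \<Rightarrow> real \<Rightarrow> real" where
  "E_lat f x y A =
     (\<Sum>\<^sub>\<infinity>(m, n)\<in>Zstar. f (A * ((real_of_int m + x * real_of_int n)^2 / y + y * (real_of_int n)^2)))"

definition S1 :: "real \<Rightarrow> real" where
  "S1 s = (\<Sum>\<^sub>\<infinity>(m, n)\<in>Zstar.
            (real_of_int m)^4 / (real_of_int (m^2 + m*n + n^2)) powr s)"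

definition strict_local_min2 :: "(real \<Rightarrow> real \<Rightarrow> real) \<Rightarrow> real \<Rightarrow> real \<Rightarrow> bool" where
  "strict_local_min2 F x0 y0 \<longleftrightarrow>
     (\<exists>\<delta>>0. \<forall>x y. (x, y) \<noteq> (x0, y0) \<and> dist (x, y) (x0, y0) < \<delta> \<longrightarrow> F x0 y0 < F x y)"

definition strict_local_max2 :: "(real \<Rightarrow> real \<Rightarrow> real) \<Rightarrow> real \<Rightarrow> real \<Rightarrow> bool" where
  "strict_local_max2 F x0 y0 \<longleftrightarrow>
     (\<exists>\<delta>>0. \<forall>x y. (x, y) \<noteq> (x0, y0) \<and> dist (x, y) (x0, y0) < \<delta> \<longrightarrow> F x y < F x0 y0)"

end

theory Submission
  imports Defs
begin

definition hh :: "real \<Rightarrow> int \<Rightarrow> real" where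
  "hh r k = (1 + real_of_int \<bar>k\<bar>) powr (- r)"

lemma hh_nat_summable:
  assumes "r > 1"
  shows "(\<lambda>n::nat. (1 + real n) powr (- r)) summable_on UNIV"
proof -
  have "summable (\<lambda>n::nat. real n powr (- r))"
    using assms by (subst summable_real_powr_iff) auto
  then have "summable (\<lambda>n::nat. real (Suc n) powr (- r))"
    by (subst summable_Suc_iff)
  then have "summable (\<lambda>n::nat. (1 + real n) powr (- r))" by (simp add: add.commute)
  then show ?thesis by (rule summable_nonneg_imp_summable_on) simp
qed

lemma hh_summable:
  assumes "r > 1"
  shows "hh r summable_on UNIV"
proof -
  have 1: "hh r summable_on range int"
  proof -
    have "(hh r \<circ> int) summable_on UNIV"
      using hh_nat_summable[OF assms] by (simp add: o_def hh_def)
    then show ?thesis by (subst summable_on_reindex) (auto simp: inj_on_def)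
  qed
  have 2: "hh r summable_on range (\<lambda>n::nat. - int n)"
  proof -
    have "(hh r \<circ> (\<lambda>n::nat. - int n)) summable_on UNIV"
      using hh_nat_summable[OF assms] by (simp add: o_def hh_def)
    then show ?thesis by (subst summable_on_reindex) (auto simp: inj_on_def)
  qed
  have "range int \<union> range (\<lambda>n::nat. - int n) = (UNIV :: int set)"
  proof -
    { fix k :: int have "k \<in> range int \<union> range (\<lambda>n::nat. - int n)"
      proof (cases "k \<ge> 0")
        case True then show ?thesis by (auto intro!: image_eqI[of _ _ "nat k"])
      next
        case False then show ?thesis by (auto intro!: image_eqI[of _ _ "nat (-k)"])
      qed }
    then show ?thesis by auto
  qed
  with summable_on_union[OF 1 2] show ?thesis by simp
qed

lemma hh_nonneg: "hh r k \<ge> 0" by (simp add: hh_def)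

lemma hh2_summable:
  assumes "r > 1"
  shows "(\<lambda>(m,n). hh r m * hh r n) summable_on (UNIV :: (int \<times> int) set)"
proof -
  have "(\<lambda>(m,n). hh r m * hh r n) summable_on Sigma UNIV (\<lambda>_. UNIV)"
  proof (rule summable_on_SigmaI[where g = "\<lambda>m. hh r m * infsum (hh r) UNIV"])
    fix m :: int
    show "((\<lambda>n. (\<lambda>(m,n). hh r m * hh r n) (m, n)) has_sum hh r m * infsum (hh r) UNIV) UNIV"
      using has_sum_cmult_right[OF has_sum_infsum[OF hh_summable[OF assms]]] by simp
  next
    show "(\<lambda>m. hh r m * infsum (hh r) UNIV) summable_on UNIV"
      by (rule summable_on_cmult_left[OF hh_summable[OF assms]])
  qed (auto simp: hh_nonneg)
  then show ?thesis by simp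
qed

definition qq :: "int \<Rightarrow> int \<Rightarrow> real" where
  "qq m n = real_of_int (m^2 + m*n + n^2)"

lemma qq_ge: "2 * qq m n \<ge> real_of_int (m^2 + n^2)"
proof -
  have "0 \<le> (real_of_int m + real_of_int n)^2" by simp
  then show ?thesis by (simp add: qq_def power2_eq_square algebra_simps)
qed

lemma qq_pos: "(m, n) \<in> Zstar \<Longrightarrow> qq m n > 0"
proof -
  assume "(m,n) \<in> Zstar"
  then have "m \<noteq> 0 \<or> n \<noteq> 0" by (auto simp: Zstar_def)
  then have "real_of_int (m^2 + n^2) > 0" by (auto simp: add_pos_nonneg add_nonneg_pos)
  with qq_ge[of m n] show ?thesis by (smt (verit))
qed

lemma qq_ge_prod:
  assumes "(m, n) \<in> Zstar"
  shows "(1 + real_of_int \<bar>m\<bar>) * (1 + real_of_int \<bar>n\<bar>) \<le> 8 * qq m n"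
proof -
  define M where "M = max \<bar>real_of_int m\<bar> \<bar>real_of_int n\<bar>"
  have "m \<noteq> 0 \<or> n \<noteq> 0" using assms by (auto simp: Zstar_def)
  then have M1: "M \<ge> 1" unfolding M_def by (auto simp: le_max_iff_disj)
  have a: "1 + real_of_int \<bar>m\<bar> \<le> 2 * M" "1 + real_of_int \<bar>n\<bar> \<le> 2 * M" using M1 unfolding M_def by auto
  have "(1 + real_of_int \<bar>m\<bar>) * (1 + real_of_int \<bar>n\<bar>) \<le> (2*M) * (2*M)"
    by (rule mult_mono) (use a M1 in auto)
  also have "\<dots> \<le> 4 * real_of_int (m^2 + n^2)"
    unfolding M_def by (auto simp: max_def power2_eq_square abs_mult_self_eq)
  also have "\<dots> \<le> 4 * (2 * qq m n)" by (intro mult_left_mono qq_ge) simp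
  also have "\<dots> = 8 * qq m n" by simp
  finally show ?thesis .
qed

lemma qq_powr_summable:
  assumes "r > 1"
  shows "(\<lambda>(m,n). qq m n powr (- r)) summable_on Zstar"
proof -
  have s: "(\<lambda>(m,n). 8 powr r * (hh r m * hh r n)) summable_on Zstar"
    using summable_on_subset[OF summable_on_cmult_right[OF hh2_summable[OF assms], of "8 powr r"]]
    by (simp add: case_prod_unfold)
  show ?thesis
  proof (rule summable_on_comparison_test[OF s])
    fix x assume x: "x \<in> Zstar"
    obtain m n where xe: "x = (m,n)" by force
    have qp: "qq m n > 0" using qq_pos x xe by simp
    have "qq m n powr (- r) = (8 * qq m n) powr (-r) * 8 powr r"
      by (simp add: powr_mult powr_minus field_simps)
    also have "\<dots> \<le> ((1 + real_of_int \<bar>m\<bar>) * (1 + real_of_int \<bar>n\<bar>)) powr (-r) * 8 powr r"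
      by (intro mult_right_mono powr_mono2') (use qq_ge_prod[of m n] x xe assms in auto)
    also have "\<dots> = 8 powr r * (hh r m * hh r n)" by (simp add: hh_def powr_mult)
    finally show "(\<lambda>(m,n). qq m n powr (- r)) x \<le> (\<lambda>(m,n). 8 powr r * (hh r m * hh r n)) x"
      using xe by simp
  qed (auto simp: case_prod_unfold)
qed

lemma powr_bound_interval:
  fixes a t :: real
  assumes "-1/2 \<le> t" "t \<le> 1/2"
  shows "(1 + t) powr a \<le> (1/2) powr a + (3/2) powr a"
proof (cases "a \<ge> 0")
  case True
  have "(1 + t) powr a \<le> (3/2) powr a" by (rule powr_mono2) (use assms True in auto)
  moreover have "0 \<le> (1/2) powr a" "0 \<le> (3/2) powr a" by simp_all
  ultimately show ?thesis by linarith
next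
  case False
  have "(1 + t) powr a \<le> (1/2) powr a" by (rule powr_mono2') (use assms False in auto)
  moreover have "0 \<le> (1/2) powr a" "0 \<le> (3/2) powr a" by simp_all
  ultimately show ?thesis by linarith
qed

lemma taylor_powr:
  fixes p :: real
  obtains K where "K \<ge> 0" "\<And>e. \<bar>e\<bar> \<le> 1/2 \<Longrightarrow>
      \<bar>(1 + e) powr p - (1 + p * e + p * (p - 1) / 2 * e^2)\<bar> \<le> K * \<bar>e\<bar>^3"
proof -
  define K where "K = \<bar>p * (p-1) * (p-2)\<bar> * ((1/2) powr (p-3) + (3/2) powr (p-3)) / 6"
  have K0: "K \<ge> 0" unfolding K_def by (intro divide_nonneg_pos mult_nonneg_nonneg add_nonneg_nonneg) auto
  define diff :: "nat \<Rightarrow> real \<Rightarrow> real" where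
    "diff = (\<lambda>k x. (\<Prod>i<k. (p - real i)) * (1 + x) powr (p - real k))"
  have bound: "\<bar>(1 + e) powr p - (1 + p * e + p * (p - 1) / 2 * e^2)\<bar> \<le> K * \<bar>e\<bar>^3"
    if e: "\<bar>e\<bar> \<le> 1/2" for e
  proof (cases "e = 0")
    case True then show ?thesis by simp
  next
    case False
    have D: "\<forall>m t. m < 3 \<and> -1/2 \<le> t \<and> t \<le> 1/2 \<longrightarrow> DERIV (diff m) t :> diff (Suc m) t"
    proof (intro allI impI)
      fix m :: nat and t :: real
      assume a: "m < 3 \<and> -1/2 \<le> t \<and> t \<le> 1/2"
      have pos: "1 + t > 0" using a by auto
      have "DERIV (\<lambda>x. (1 + x) powr (p - real m)) t :> (p - real m) * (1 + t) powr (p - real m - of_nat 1) * 1"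
        by (rule DERIV_fun_powr) (use pos in \<open>auto intro!: derivative_eq_intros\<close>)
      then have "DERIV (\<lambda>x. (\<Prod>i<m. (p - real i)) * (1 + x) powr (p - real m)) t :>
          (\<Prod>i<m. (p - real i)) * ((p - real m) * (1 + t) powr (p - real m - of_nat 1) * 1)"
        by (rule DERIV_cmult)
      then show "DERIV (diff m) t :> diff (Suc m) t"
        unfolding diff_def by (simp add: algebra_simps)
    qed
    obtain t where t: "(if e < 0 then e < t \<and> t < 0 else 0 < t \<and> t < e)"
      and eq: "(1 + e) powr p = (\<Sum>m<3. (diff m 0 / fact m) * (e - 0)^m) + (diff 3 t / fact 3) * (e - 0)^3"
    proof -
      have d0: "diff 0 = (\<lambda>x. (1 + x) powr p)" by (simp add: diff_def)
      have i: "-1/2 \<le> (0::real)" "(0::real) \<le> 1/2" "-1/2 \<le> e" "e \<le> 1/2" using e by auto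
      from Taylor[of 3 diff "\<lambda>x. (1 + x) powr p" "-1/2" "1/2" 0 e, OF zero_less_numeral d0 D i False]
      show ?thesis using that by blast
    qed
    have tb: "-1/2 \<le> t" "t \<le> 1/2" using t e by (auto split: if_splits)
    have sum: "(\<Sum>m<3. (diff m 0 / fact m) * (e - 0)^m) = 1 + p * e + p * (p - 1) / 2 * e^2"
      by (simp add: diff_def eval_nat_numeral fact_numeral lessThan_Suc algebra_simps)
    have d3: "diff 3 t = p * (p-1) * (p-2) * (1 + t) powr (p - 3)"
      by (simp add: diff_def eval_nat_numeral lessThan_Suc algebra_simps)
    have "\<bar>(1 + e) powr p - (1 + p * e + p * (p - 1) / 2 * e^2)\<bar> = \<bar>diff 3 t / 6 * e^3\<bar>"
      using eq sum by (simp add: fact_numeral)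
    also have "\<dots> = \<bar>p * (p-1) * (p-2)\<bar> * (1 + t) powr (p - 3) / 6 * \<bar>e\<bar>^3"
      by (simp add: d3 abs_mult power_abs)
    also have "\<dots> \<le> K * \<bar>e\<bar>^3" unfolding K_def
      by (intro mult_right_mono divide_right_mono mult_left_mono powr_bound_interval tb) auto
    finally show ?thesis .
  qed
  show ?thesis using that K0 bound by blast
qed

lemma summable_bound:
  fixes f :: "int \<times> int \<Rightarrow> real"
  assumes r: "r > 1" and b: "\<And>m n. (m,n) \<in> Zstar \<Longrightarrow> \<bar>f (m,n)\<bar> \<le> C * qq m n powr (- r)"
  shows "f summable_on Zstar"
proof -
  have g: "(\<lambda>x. C * (case x of (m,n) \<Rightarrow> qq m n powr (- r))) summable_on Zstar"
    by (rule summable_on_cmult_right[OF qq_powr_summable[OF r]])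
  have "(\<lambda>x. norm (f x)) summable_on Zstar"
  proof (rule summable_on_comparison_test[OF g])
    fix x assume "x \<in> Zstar"
    then obtain m n where x: "x = (m,n)" "(m,n) \<in> Zstar" by (cases x) auto
    have "\<bar>f (m,n)\<bar> \<le> C * qq m n powr (- r)" using b x by auto
    then show "norm (f x) \<le> C * (case x of (m,n) \<Rightarrow> qq m n powr (- r))"
      using x by auto
  qed simp
  then show ?thesis using summable_on_iff_abs_summable_on_real by blast
qed

lemma mono_bound:
  fixes m n :: int
  assumes "i + j = 4"
  shows "\<bar>real_of_int m ^ i * real_of_int n ^ j\<bar> \<le> 4 * qq m n ^ 2"
proof -
  define M where "M = max \<bar>real_of_int m\<bar> \<bar>real_of_int n\<bar>"
  have "\<bar>real_of_int m ^ i * real_of_int n ^ j\<bar> = \<bar>real_of_int m\<bar> ^ i * \<bar>real_of_int n\<bar> ^ j"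
    by (simp add: abs_mult power_abs)
  also have "\<dots> \<le> M ^ i * M ^ j"
    by (intro mult_mono power_mono) (auto simp: M_def)
  also have "\<dots> = M ^ (i + j)" by (simp add: power_add)
  also have "\<dots> = M ^ 4" using assms by simp
  also have "\<dots> = (M^2)^2" by (simp add: power_mult[symmetric])
  also have "\<dots> \<le> (real_of_int (m^2 + n^2))^2"
    by (intro power_mono) (auto simp: M_def max_def)
  also have "\<dots> \<le> (2 * qq m n)^2"
    by (intro power_mono qq_ge) auto
  finally show ?thesis by (simp add: power_mult_distrib)
qed

lemma qq_pow_powr: "(m,n) \<in> Zstar \<Longrightarrow> qq m n powr (- s) * qq m n ^ 2 = qq m n powr (2 - s)"
proof -
  assume z: "(m,n) \<in> Zstar"
  have p: "qq m n > 0" using qq_pos[OF z] .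
  have "qq m n powr (2 - s) = qq m n powr 2 * qq m n powr (- s)"
    by (subst powr_add[symmetric]) simp
  also have "qq m n powr 2 = qq m n ^ 2" using p by (simp add: powr_numeral)
  finally show ?thesis by simp
qed

definition mom :: "real \<Rightarrow> nat \<Rightarrow> nat \<Rightarrow> int \<times> int \<Rightarrow> real" where
  "mom s i j = (\<lambda>(m,n). qq m n powr (- s) * (real_of_int m ^ i * real_of_int n ^ j))"

lemma mom_summable:
  assumes "s > 3" "i + j = 4"
  shows "mom s i j summable_on Zstar"
proof (rule summable_bound[where r = "s - 2" and C = 4])
  show "s - 2 > 1" using assms by simp
  fix m n :: int assume z: "(m,n) \<in> Zstar"
  have qp: "qq m n > 0" using qq_pos[OF z] .
  have "\<bar>mom s i j (m,n)\<bar> = qq m n powr (- s) * \<bar>real_of_int m ^ i * real_of_int n ^ j\<bar>"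
    by (simp add: mom_def abs_mult)
  also have "\<dots> \<le> qq m n powr (- s) * (4 * qq m n ^ 2)"
    by (intro mult_left_mono mono_bound assms) auto
  also have "\<dots> = 4 * qq m n powr (- (s - 2))" using qq_pow_powr[OF z, of s] by simp
  finally show "\<bar>mom s i j (m,n)\<bar> \<le> 4 * qq m n powr (- (s - 2))" .
qed

lemma infsum_lin5:
  fixes f0 f1 f2 f3 f4 :: "'a \<Rightarrow> real"
  assumes "f0 summable_on A" "f1 summable_on A" "f2 summable_on A" "f3 summable_on A" "f4 summable_on A"
  shows "infsum (\<lambda>x. c0 * f0 x + c1 * f1 x + c2 * f2 x + c3 * f3 x + c4 * f4 x) A =
         c0 * infsum f0 A + c1 * infsum f1 A + c2 * infsum f2 A + c3 * infsum f3 A + c4 * infsum f4 A"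
  and "(\<lambda>x. c0 * f0 x + c1 * f1 x + c2 * f2 x + c3 * f3 x + c4 * f4 x) summable_on A"
proof -
  note s = summable_on_cmult_right[OF assms(1), of c0] summable_on_cmult_right[OF assms(2), of c1]
    summable_on_cmult_right[OF assms(3), of c2] summable_on_cmult_right[OF assms(4), of c3]
    summable_on_cmult_right[OF assms(5), of c4]
  note s2 = summable_on_add[OF s(1) s(2)]
  note s3 = summable_on_add[OF s2 s(3)]
  note s4 = summable_on_add[OF s3 s(4)]
  show "(\<lambda>x. c0 * f0 x + c1 * f1 x + c2 * f2 x + c3 * f3 x + c4 * f4 x) summable_on A"
    using summable_on_add[OF s4 s(5)] .
  show "infsum (\<lambda>x. c0 * f0 x + c1 * f1 x + c2 * f2 x + c3 * f3 x + c4 * f4 x) A =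
         c0 * infsum f0 A + c1 * infsum f1 A + c2 * infsum f2 A + c3 * infsum f3 A + c4 * infsum f4 A"
    by (simp add: infsum_add[OF s4 s(5)] infsum_add[OF s3 s(4)] infsum_add[OF s2 s(3)] infsum_add[OF s(1) s(2)] infsum_cmult_right[OF assms(1)] infsum_cmult_right[OF assms(2)] infsum_cmult_right[OF assms(3)] infsum_cmult_right[OF assms(4)] infsum_cmult_right[OF assms(5)])
qed

lemma Zstar_swap: "(m,n) \<in> Zstar \<longleftrightarrow> (n,m) \<in> Zstar" by (auto simp: Zstar_def)
lemma Zstar_sig: "(m,n) \<in> Zstar \<longleftrightarrow> (m+n,-n) \<in> Zstar" by (auto simp: Zstar_def)

lemma infsum_swap:
  "infsum (\<lambda>(m,n). g n m) Zstar = infsum (\<lambda>(m,n). g m n) Zstar"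
  by (rule infsum_reindex_bij_witness[where i = "\<lambda>(m,n). (n,m)" and j = "\<lambda>(m,n). (n,m)"]) (auto simp: Zstar_def)

lemma infsum_sig:
  "infsum (\<lambda>(m,n). g (m+n) (-n)) Zstar = infsum (\<lambda>(m,n). g m n) Zstar"
  by (rule infsum_reindex_bij_witness[where i = "\<lambda>(m,n). (m+n,-n)" and j = "\<lambda>(m,n). (m+n,-n)"]) (auto simp: Zstar_def)

lemma qq_swap: "qq n m = qq m n" by (simp add: qq_def algebra_simps)
lemma qq_sig: "qq (m+n) (-n) = qq m n" by (simp add: qq_def power2_eq_square algebra_simps)

lemma sig40: "mom s 4 0 (m+n, -n) = 1*mom s 4 0 (m,n) + 4*mom s 3 1 (m,n) + 6*mom s 2 2 (m,n) + 4*mom s 1 3 (m,n) + 1*mom s 0 4 (m,n)"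
  unfolding mom_def prod.case qq_sig of_int_add of_int_minus by algebra
lemma sig31: "mom s 3 1 (m+n, -n) = 0*mom s 4 0 (m,n) + (-1)*mom s 3 1 (m,n) + (-3)*mom s 2 2 (m,n) + (-3)*mom s 1 3 (m,n) + (-1)*mom s 0 4 (m,n)"
  unfolding mom_def prod.case qq_sig of_int_add of_int_minus by algebra

lemma moment:
  assumes s: "s > 3"
  shows "infsum (\<lambda>(m,n). qq m n powr (- s) * (c0 * real_of_int m ^ 4 + c1 * real_of_int m ^ 3 * real_of_int n
           + c2 * real_of_int m ^ 2 * real_of_int n ^ 2 + c3 * real_of_int m * real_of_int n ^ 3
           + c4 * real_of_int n ^ 4)) Zstar
       = infsum (mom s 4 0) Zstar * (c0 - c1/2 + c2/2 - c3/2 + c4)"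
proof -
  define A0 A1 A2 A3 A4 where "A0 = infsum (mom s 4 0) Zstar" "A1 = infsum (mom s 3 1) Zstar"
    "A2 = infsum (mom s 2 2) Zstar" "A3 = infsum (mom s 1 3) Zstar" "A4 = infsum (mom s 0 4) Zstar"
  have S: "mom s 4 0 summable_on Zstar" "mom s 3 1 summable_on Zstar" "mom s 2 2 summable_on Zstar"
     "mom s 1 3 summable_on Zstar" "mom s 0 4 summable_on Zstar" using mom_summable[OF s] by simp_all
  have gen: "infsum (\<lambda>x. d0 * mom s 4 0 x + d1 * mom s 3 1 x + d2 * mom s 2 2 x + d3 * mom s 1 3 x
        + d4 * mom s 0 4 x) Zstar = d0 * A0 + d1 * A1 + d2 * A2 + d3 * A3 + d4 * A4" for d0 d1 d2 d3 d4
    unfolding A0_A1_A2_A3_A4_def by (rule infsum_lin5(1)[OF S])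
  have e40: "A4 = A0"
    unfolding A0_A1_A2_A3_A4_def mom_def
    using infsum_swap[of "\<lambda>m n. qq m n powr (- s) * (real_of_int m ^ 4 * real_of_int n ^ 0)"]
    by (simp add: qq_swap)
  have e31: "A3 = A1"
    unfolding A0_A1_A2_A3_A4_def mom_def
    using infsum_swap[of "\<lambda>m n. qq m n powr (- s) * (real_of_int m ^ 3 * real_of_int n ^ 1)"]
    by (simp add: qq_swap mult.commute)
  have r1: "A0 = A0 + 4 * A1 + 6 * A2 + 4 * A3 + A4"
  proof -
    have "A0 = infsum (\<lambda>(m,n). mom s 4 0 (m+n, -n)) Zstar"
      unfolding A0_A1_A2_A3_A4_def using infsum_sig[of "\<lambda>m n. mom s 4 0 (m,n)"] by simp
    also have "\<dots> = infsum (\<lambda>x. 1 * mom s 4 0 x + 4 * mom s 3 1 x + 6 * mom s 2 2 x + 4 * mom s 1 3 x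
        + 1 * mom s 0 4 x) Zstar"
      by (rule infsum_cong) (auto simp only: sig40 sig31 prod.case split: prod.split)
    also have "\<dots> = 1 * A0 + 4 * A1 + 6 * A2 + 4 * A3 + 1 * A4" by (rule gen)
    finally show ?thesis by simp
  qed
  have r2: "A1 = - A1 - 3 * A2 - 3 * A3 - A4"
  proof -
    have "A1 = infsum (\<lambda>(m,n). mom s 3 1 (m+n, -n)) Zstar"
      unfolding A0_A1_A2_A3_A4_def using infsum_sig[of "\<lambda>m n. mom s 3 1 (m,n)"] by simp
    also have "\<dots> = infsum (\<lambda>x. 0 * mom s 4 0 x + (-1) * mom s 3 1 x + (-3) * mom s 2 2 x + (-3) * mom s 1 3 x
        + (-1) * mom s 0 4 x) Zstar"
      by (rule infsum_cong) (auto simp only: sig40 sig31 prod.case split: prod.split)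
    also have "\<dots> = 0 * A0 + (-1) * A1 + (-3) * A2 + (-3) * A3 + (-1) * A4" by (rule gen)
    finally show ?thesis by simp
  qed
  have a1: "A1 = - A0 / 2" and a2: "A2 = A0 / 2" using r1 r2 e40 e31 by linarith+
  have "infsum (\<lambda>(m,n). qq m n powr (- s) * (c0 * real_of_int m ^ 4 + c1 * real_of_int m ^ 3 * real_of_int n
           + c2 * real_of_int m ^ 2 * real_of_int n ^ 2 + c3 * real_of_int m * real_of_int n ^ 3
           + c4 * real_of_int n ^ 4)) Zstar
      = infsum (\<lambda>x. c0 * mom s 4 0 x + c1 * mom s 3 1 x + c2 * mom s 2 2 x + c3 * mom s 1 3 x
        + c4 * mom s 0 4 x) Zstar"
    by (rule infsum_cong) (auto simp: mom_def algebra_simps)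
  also have "\<dots> = c0 * A0 + c1 * A1 + c2 * A2 + c3 * A3 + c4 * A4" by (rule gen)
  also have "\<dots> = A0 * (c0 - c1/2 + c2/2 - c3/2 + c4)" using a1 a2 e40 e31 by (simp add: algebra_simps)
  finally show ?thesis unfolding A0_A1_A2_A3_A4_def .
qed

lemma moment_summable:
  assumes s: "s > 3"
  shows "(\<lambda>(m,n). qq m n powr (- s) * (c0 * real_of_int m ^ 4 + c1 * real_of_int m ^ 3 * real_of_int n
           + c2 * real_of_int m ^ 2 * real_of_int n ^ 2 + c3 * real_of_int m * real_of_int n ^ 3
           + c4 * real_of_int n ^ 4)) summable_on Zstar"
proof -
  have S: "mom s 4 0 summable_on Zstar" "mom s 3 1 summable_on Zstar" "mom s 2 2 summable_on Zstar"
     "mom s 1 3 summable_on Zstar" "mom s 0 4 summable_on Zstar" using mom_summable[OF s] by simp_all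
  have "(\<lambda>x. c0 * mom s 4 0 x + c1 * mom s 3 1 x + c2 * mom s 2 2 x + c3 * mom s 1 3 x
        + c4 * mom s 0 4 x) summable_on Zstar" by (rule infsum_lin5(2)[OF S])
  then show ?thesis
    by (rule summable_on_cong[THEN iffD1, rotated]) (auto simp: mom_def algebra_simps)
qed

lemma S1_mom: "S1 s = infsum (mom s 4 0) Zstar"
  unfolding S1_def mom_def qq_def
  by (rule infsum_cong) (auto simp: powr_minus_divide)

definition y0 :: real where "y0 = sqrt 3 / 2"

lemma y0_sq: "y0^2 = 3/4" by (simp add: y0_def power_divide)
lemma y0_pos: "y0 > 0" by (simp add: y0_def)
lemma y0_le1: "y0 \<le> 1"
proof -
  have "sqrt 3 \<le> sqrt (2^2)" by (rule real_sqrt_le_mono) simp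
  then have "sqrt 3 \<le> 2" by simp
  then show ?thesis by (simp add: y0_def)
qed

definition al :: "int \<Rightarrow> int \<Rightarrow> real" where "al m n = real_of_int m + real_of_int n / 2"
definition PP1 :: "real \<Rightarrow> real \<Rightarrow> int \<Rightarrow> int \<Rightarrow> real" where
  "PP1 u v m n = 2 * u * (al m n * real_of_int n) + 2 * y0 * v * (real_of_int n)^2"
definition PP2 :: "real \<Rightarrow> real \<Rightarrow> int \<Rightarrow> int \<Rightarrow> real" where
  "PP2 u v m n = (u^2 + v^2) * (real_of_int n)^2"
definition PP :: "real \<Rightarrow> real \<Rightarrow> int \<Rightarrow> int \<Rightarrow> real" where
  "PP u v m n = (al m n + u * real_of_int n)^2 + (y0 + v)^2 * (real_of_int n)^2"

lemma qq_al: "qq m n = (al m n)^2 + 3/4 * (real_of_int n)^2"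
  by (simp add: qq_def al_def power2_eq_square algebra_simps)

lemma PP_eq: "PP u v m n = qq m n + PP1 u v m n + PP2 u v m n"
proof -
  have "PP u v m n = (al m n)^2 + y0^2 * (real_of_int n)^2 + PP1 u v m n + PP2 u v m n"
    unfolding PP_def PP1_def PP2_def by (simp add: power2_eq_square algebra_simps)
  then show ?thesis using y0_sq qq_al by simp
qed

lemma n2_le: "(real_of_int n)^2 \<le> 4/3 * qq m n"
  using qq_al[of m n] zero_le_power2[of "al m n"] by linarith

lemma aln_le: "\<bar>al m n * real_of_int n\<bar> \<le> 2 * qq m n"
proof -
  define a b where "a = \<bar>al m n\<bar>" and "b = \<bar>real_of_int n\<bar>"
  have "0 \<le> (a - b)^2" by simp
  also have "(a - b)^2 = a^2 - 2 * (a * b) + b^2" by (simp add: power2_diff)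
  finally have "2 * (a * b) \<le> a^2 + b^2" by linarith
  moreover have "a^2 = (al m n)^2" "b^2 = (real_of_int n)^2" "a * b = \<bar>al m n * real_of_int n\<bar>"
    unfolding a_def b_def by (simp_all add: abs_mult)
  ultimately have "2 * \<bar>al m n * real_of_int n\<bar> \<le> (al m n)^2 + (real_of_int n)^2" by simp
  then show ?thesis using qq_al[of m n] n2_le[of n m] zero_le_power2[of "al m n"] by linarith
qed

lemma PP1_le:
  assumes "(m,n) \<in> Zstar"
  shows "\<bar>PP1 u v m n\<bar> \<le> 4 * qq m n * (\<bar>u\<bar> + \<bar>v\<bar>)"
proof -
  have q: "qq m n > 0" using qq_pos[OF assms] .
  have "\<bar>2 * u * (al m n * real_of_int n)\<bar> = (2 * \<bar>u\<bar>) * \<bar>al m n * real_of_int n\<bar>"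
    by (simp add: abs_mult)
  also have "\<dots> \<le> (2 * \<bar>u\<bar>) * (2 * qq m n)" by (intro mult_left_mono aln_le) simp
  finally have a: "\<bar>2 * u * (al m n * real_of_int n)\<bar> \<le> 4 * qq m n * \<bar>u\<bar>" by (simp add: mult_ac)
  have "\<bar>2 * y0 * v * (real_of_int n)^2\<bar> = 2 * y0 * \<bar>v\<bar> * (real_of_int n)^2"
    using y0_pos by (simp add: abs_mult)
  also have "\<dots> \<le> 2 * 1 * \<bar>v\<bar> * (4/3 * qq m n)"
    by (intro mult_mono n2_le) (use y0_le1 y0_pos in auto)
  finally have b: "\<bar>2 * y0 * v * (real_of_int n)^2\<bar> \<le> 8/3 * qq m n * \<bar>v\<bar>" by (simp add: mult_ac)
  have "\<bar>PP1 u v m n\<bar> \<le> 4 * qq m n * \<bar>u\<bar> + 8/3 * qq m n * \<bar>v\<bar>"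
    unfolding PP1_def using a b by linarith
  also have "\<dots> \<le> 4 * qq m n * (\<bar>u\<bar> + \<bar>v\<bar>)" using q by (simp add: algebra_simps)
  finally show ?thesis .
qed

lemma PP2_le:
  assumes "(m,n) \<in> Zstar"
  shows "\<bar>PP2 u v m n\<bar> \<le> 2 * qq m n * (\<bar>u\<bar> + \<bar>v\<bar>)^2"
proof -
  have q: "qq m n > 0" using qq_pos[OF assms] .
  have r: "u^2 + v^2 \<le> (\<bar>u\<bar> + \<bar>v\<bar>)^2" by (simp add: power2_eq_square algebra_simps)
  have "\<bar>PP2 u v m n\<bar> = (u^2 + v^2) * (real_of_int n)^2" by (simp add: PP2_def)
  also have "\<dots> \<le> (\<bar>u\<bar> + \<bar>v\<bar>)^2 * (4/3 * qq m n)"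
    by (intro mult_mono r n2_le) auto
  also have "\<dots> \<le> 2 * qq m n * (\<bar>u\<bar> + \<bar>v\<bar>)^2" using q by simp
  finally show ?thesis .
qed

definition cf :: "real \<Rightarrow> real \<Rightarrow> real \<Rightarrow> nat \<Rightarrow> real" where
  "cf t u v k = (if k = 0 then 1
     else if k = 1 then 2 - 2*t* u
     else if k = 2 then 3 - t*(3* u + 2*y0* v + (u^2+v^2)) + 2*t*(t+1)* u^2
     else if k = 3 then 2 - t*(3* u + 2*y0* v + (u^2+v^2)) + t*(t+1)/2*(4* u^2 + 8*y0* u* v)
     else 1 - t*(u + 2*y0* v + (u^2+v^2)) + t*(t+1)/2*(u^2 + 4*y0* u* v + 4*y0^2* v^2))"

definition mainf :: "real \<Rightarrow> real \<Rightarrow> real \<Rightarrow> int \<times> int \<Rightarrow> real" where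
  "mainf t u v = (\<lambda>(m,n). qq m n powr (- (t+2)) * (cf t u v 0 * real_of_int m ^ 4
     + cf t u v 1 * real_of_int m ^ 3 * real_of_int n
     + cf t u v 2 * real_of_int m ^ 2 * real_of_int n ^ 2 + cf t u v 3 * real_of_int m * real_of_int n ^ 3
     + cf t u v 4 * real_of_int n ^ 4))"

lemma B_poly:
  "qq m n ^ 2 - t * qq m n * (PP1 u v m n + PP2 u v m n) + t*(t+1)/2 * (PP1 u v m n)^2
   = cf t u v 0 * real_of_int m ^ 4 + cf t u v 1 * real_of_int m ^ 3 * real_of_int n
     + cf t u v 2 * real_of_int m ^ 2 * real_of_int n ^ 2 + cf t u v 3 * real_of_int m * real_of_int n ^ 3
     + cf t u v 4 * real_of_int n ^ 4"
  unfolding cf_def qq_def PP1_def PP2_def al_def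
  by (simp add: power2_eq_square power3_eq_cube power4_eq_xxxx field_simps)

lemma main_eq:
  assumes z: "(m,n) \<in> Zstar"
  shows "qq m n powr (- t) * (1 - t * ((PP1 u v m n + PP2 u v m n) / qq m n) + t*(t+1)/2 * (PP1 u v m n / qq m n)^2)
         = mainf t u v (m,n)"
proof -
  have q: "qq m n > 0" using qq_pos[OF z] .
  have pw: "qq m n powr (- t) = qq m n powr (- (t+2)) * qq m n ^ 2"
    using qq_pow_powr[OF z, of "t+2"] by simp
  have "qq m n ^ 2 * (1 - t * ((PP1 u v m n + PP2 u v m n) / qq m n) + t*(t+1)/2 * (PP1 u v m n / qq m n)^2)
        = qq m n ^ 2 - t * qq m n * (PP1 u v m n + PP2 u v m n) + t*(t+1)/2 * (PP1 u v m n)^2"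
    using q by (simp add: field_simps power2_eq_square)
  then show ?thesis unfolding mainf_def using B_poly[of m n t u v] pw by (simp add: mult.assoc)
qed

lemma term_bound:
  fixes t :: real
  assumes t: "t > 1"
  obtains KR where "KR \<ge> 0" "\<And>u v m n. \<bar>u\<bar> + \<bar>v\<bar> \<le> 1/12 \<Longrightarrow> (m,n) \<in> Zstar \<Longrightarrow>
      PP u v m n > 0 \<and> \<bar>PP u v m n powr (- t) - mainf t u v (m,n)\<bar> \<le> KR * (\<bar>u\<bar> + \<bar>v\<bar>)^3 * qq m n powr (- t)"
proof -
  obtain K where K0: "K \<ge> 0" and K: "\<And>e. \<bar>e\<bar> \<le> 1/2 \<Longrightarrow>
      \<bar>(1 + e) powr (- t) - (1 + (- t) * e + (- t) * ((- t) - 1) / 2 * e^2)\<bar> \<le> K * \<bar>e\<bar>^3"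
    using taylor_powr[of "- t"] by blast
  define KR where "KR = 216 * K + 10 * t * (t + 1)"
  have KR0: "KR \<ge> 0" unfolding KR_def using K0 t by simp
  have main: "PP u v m n > 0 \<and> \<bar>PP u v m n powr (- t) - mainf t u v (m,n)\<bar> \<le> KR * (\<bar>u\<bar> + \<bar>v\<bar>)^3 * qq m n powr (- t)"
    if r: "\<bar>u\<bar> + \<bar>v\<bar> \<le> 1/12" and z: "(m,n) \<in> Zstar" for u v m n
  proof -
    define q where "q = qq m n"
    define r1 where "r1 = \<bar>u\<bar> + \<bar>v\<bar>"
    define a where "a = PP1 u v m n / q"
    define b where "b = PP2 u v m n / q"
    define e where "e = a + b"
    have q0: "q > 0" unfolding q_def using qq_pos[OF z] .
    have r10: "r1 \<ge> 0" "r1 \<le> 1/12" unfolding r1_def using r by auto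
    have ha: "\<bar>a\<bar> \<le> 4 * r1"
      using PP1_le[OF z, of u v] q0 unfolding a_def r1_def q_def by (simp add: divide_le_eq abs_divide mult_ac)
    have hb: "\<bar>b\<bar> \<le> 2 * r1^2"
      using PP2_le[OF z, of u v] q0 unfolding b_def r1_def q_def by (simp add: divide_le_eq abs_divide mult_ac)
    have r1sq: "r1^2 \<le> r1" using r10 mult_left_le[of r1 r1] by (simp add: power2_eq_square)
    have he: "\<bar>e\<bar> \<le> 6 * r1" unfolding e_def using ha hb r1sq by linarith
    have he2: "\<bar>e\<bar> \<le> 1/2" using he r10 by linarith
    have PPe: "PP u v m n = q * (1 + e)"
      unfolding e_def a_def b_def using q0 PP_eq[of u v m n] by (simp add: field_simps q_def)
    have PPpos: "PP u v m n > 0" using PPe q0 he2 by simp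
    have pw: "PP u v m n powr (- t) = q powr (- t) * (1 + e) powr (- t)"
      using PPe q0 he2 by (simp add: powr_mult)
    have m0: "mainf t u v (m,n) = q powr (- t) * (1 - t * e + t*(t+1)/2 * a^2)"
      using main_eq[OF z, of t u v] unfolding q_def e_def a_def b_def by (simp add: add_divide_distrib)
    have T: "\<bar>(1 + e) powr (- t) - (1 - t * e + t*(t+1)/2 * e^2)\<bar> \<le> K * \<bar>e\<bar>^3"
      using K[OF he2] by (simp add: algebra_simps)
    have "\<bar>e\<bar>^3 \<le> (6 * r1)^3" by (rule power_mono[OF he]) simp
    then have T2: "K * \<bar>e\<bar>^3 \<le> K * 216 * r1^3" using K0 mult_left_mono[of "\<bar>e\<bar>^3" "216 * r1^3" K] by (simp add: power_mult_distrib mult.assoc)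
    have "e^2 - a^2 = b * (2 * a + b)" unfolding e_def by (simp add: power2_eq_square algebra_simps)
    then have "\<bar>e^2 - a^2\<bar> = \<bar>b\<bar> * \<bar>2 * a + b\<bar>" by (simp add: abs_mult)
    also have "\<dots> \<le> (2 * r1^2) * (10 * r1)"
      by (intro mult_mono hb) (use ha hb r1sq in auto)
    finally have D: "\<bar>e^2 - a^2\<bar> \<le> 20 * r1^3" by (simp add: power2_eq_square power3_eq_cube)
    have "\<bar>(1 + e) powr (- t) - (1 - t * e + t*(t+1)/2 * a^2)\<bar>
        \<le> \<bar>(1 + e) powr (- t) - (1 - t * e + t*(t+1)/2 * e^2)\<bar> + t*(t+1)/2 * \<bar>e^2 - a^2\<bar>"
    proof -
      have "(1 + e) powr (- t) - (1 - t * e + t*(t+1)/2 * a^2)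
          = ((1 + e) powr (- t) - (1 - t * e + t*(t+1)/2 * e^2)) + t*(t+1)/2 * (e^2 - a^2)"
        by (simp add: algebra_simps)
      also have "\<bar>\<dots>\<bar> \<le> \<bar>(1 + e) powr (- t) - (1 - t * e + t*(t+1)/2 * e^2)\<bar> + \<bar>t*(t+1)/2 * (e^2 - a^2)\<bar>"
        by (rule abs_triangle_ineq)
      also have "\<bar>t*(t+1)/2 * (e^2 - a^2)\<bar> = t*(t+1)/2 * \<bar>e^2 - a^2\<bar>" using t by (simp add: abs_mult)
      finally show ?thesis .
    qed
    also have "\<dots> \<le> K * 216 * r1^3 + t*(t+1)/2 * (20 * r1^3)"
      using T T2 D t by (intro add_mono mult_left_mono) auto
    also have "\<dots> = KR * r1^3" unfolding KR_def by (simp add: algebra_simps)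
    finally have F: "\<bar>(1 + e) powr (- t) - (1 - t * e + t*(t+1)/2 * a^2)\<bar> \<le> KR * r1^3" .
    have "\<bar>PP u v m n powr (- t) - mainf t u v (m,n)\<bar>
        = q powr (- t) * \<bar>(1 + e) powr (- t) - (1 - t * e + t*(t+1)/2 * a^2)\<bar>"
      unfolding pw m0 by (simp add: abs_mult right_diff_distrib[symmetric])
    also have "\<dots> \<le> q powr (- t) * (KR * r1^3)" by (intro mult_left_mono F) simp
    finally show ?thesis using PPpos unfolding q_def r1_def by (simp add: mult_ac)
  qed
  show ?thesis using that[OF KR0] main by blast
qed

definition mu :: "real \<Rightarrow> real \<Rightarrow> real \<Rightarrow> real" where
  "mu t u v = cf t u v 0 - cf t u v 1 / 2 + cf t u v 2 / 2 - cf t u v 3 / 2 + cf t u v 4"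

definition SS :: "real \<Rightarrow> real \<Rightarrow> real \<Rightarrow> real" where
  "SS t u v = infsum (\<lambda>(m,n). PP u v m n powr (- t)) Zstar"

definition Wt :: "real \<Rightarrow> real" where
  "Wt t = infsum (\<lambda>(m,n). qq m n powr (- t)) Zstar"

lemma mainf_summable: "t > 1 \<Longrightarrow> mainf t u v summable_on Zstar"
  unfolding mainf_def by (rule moment_summable) simp

lemma mainf_infsum: "t > 1 \<Longrightarrow> infsum (mainf t u v) Zstar = infsum (mom (t+2) 4 0) Zstar * mu t u v"
  unfolding mainf_def mu_def by (rule moment) simp

lemma S_expansion:
  fixes t :: real
  assumes t: "t > 1"
  obtains C where "C \<ge> 0" "\<And>u v. \<bar>u\<bar> + \<bar>v\<bar> \<le> 1/12 \<Longrightarrow>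
      (\<lambda>(m,n). PP u v m n powr (- t)) summable_on Zstar \<and>
      \<bar>SS t u v - infsum (mom (t+2) 4 0) Zstar * mu t u v\<bar> \<le> C * (\<bar>u\<bar> + \<bar>v\<bar>)^3"
proof -
  obtain KR where KR0: "KR \<ge> 0" and KR: "\<And>u v m n. \<bar>u\<bar> + \<bar>v\<bar> \<le> 1/12 \<Longrightarrow> (m,n) \<in> Zstar \<Longrightarrow>
      PP u v m n > 0 \<and> \<bar>PP u v m n powr (- t) - mainf t u v (m,n)\<bar> \<le> KR * (\<bar>u\<bar> + \<bar>v\<bar>)^3 * qq m n powr (- t)"
    using term_bound[OF t] by blast
  have Wsum: "(\<lambda>(m,n). qq m n powr (- t)) summable_on Zstar" by (rule qq_powr_summable[OF t])
  have W0: "Wt t \<ge> 0" unfolding Wt_def by (rule infsum_nonneg) auto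
  define C where "C = KR * Wt t"
  have C0: "C \<ge> 0" unfolding C_def using KR0 W0 by simp
  have main: "(\<lambda>(m,n). PP u v m n powr (- t)) summable_on Zstar \<and>
      \<bar>SS t u v - infsum (mom (t+2) 4 0) Zstar * mu t u v\<bar> \<le> C * (\<bar>u\<bar> + \<bar>v\<bar>)^3"
    if r: "\<bar>u\<bar> + \<bar>v\<bar> \<le> 1/12" for u v
  proof -
    define R where "R = (\<lambda>x. (\<lambda>(m,n). PP u v m n powr (- t)) x - mainf t u v x)"
    define B where "B = KR * (\<bar>u\<bar> + \<bar>v\<bar>)^3"
    have B0: "B \<ge> 0" unfolding B_def using KR0 by simp
    have Rb: "\<bar>R (m,n)\<bar> \<le> B * qq m n powr (- t)" if z: "(m,n) \<in> Zstar" for m n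
      using KR[OF r z] unfolding R_def B_def by simp
    have Rs: "R summable_on Zstar" by (rule summable_bound[OF t Rb])
    have Ms: "mainf t u v summable_on Zstar" by (rule mainf_summable[OF t])
    have eq: "(\<lambda>(m,n). PP u v m n powr (- t)) = (\<lambda>x. mainf t u v x + R x)"
      unfolding R_def by auto
    have Ps: "(\<lambda>(m,n). PP u v m n powr (- t)) summable_on Zstar"
      unfolding eq by (rule summable_on_add[OF Ms Rs])
    have "SS t u v = infsum (mainf t u v) Zstar + infsum R Zstar"
      unfolding SS_def eq by (rule infsum_add[OF Ms Rs])
    then have d: "SS t u v - infsum (mom (t+2) 4 0) Zstar * mu t u v = infsum R Zstar"
      using mainf_infsum[OF t] by simp
    have "\<bar>infsum R Zstar\<bar> \<le> infsum (\<lambda>x. norm (R x)) Zstar"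
      using norm_infsum_bound[of R Zstar] Rs summable_on_iff_abs_summable_on_real by auto
    also have "\<dots> \<le> infsum (\<lambda>x. B * (case x of (m,n) \<Rightarrow> qq m n powr (- t))) Zstar"
    proof (rule infsum_mono)
      show "(\<lambda>x. norm (R x)) summable_on Zstar" using Rs summable_on_iff_abs_summable_on_real by auto
      show "(\<lambda>x. B * (case x of (m,n) \<Rightarrow> qq m n powr (- t))) summable_on Zstar"
        by (rule summable_on_cmult_right[OF Wsum])
      fix x assume "x \<in> Zstar"
      then obtain m n where x: "x = (m,n)" "(m,n) \<in> Zstar" by (cases x) auto
      show "norm (R x) \<le> B * (case x of (m,n) \<Rightarrow> qq m n powr (- t))" using Rb[OF x(2)] x by simp
    qed
    also have "\<dots> = B * Wt t" unfolding Wt_def by (rule infsum_cmult_right[OF Wsum])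
    also have "\<dots> = C * (\<bar>u\<bar> + \<bar>v\<bar>)^3" unfolding B_def C_def by simp
    finally show ?thesis using Ps d by simp
  qed
  show ?thesis using that[OF C0] main by blast
qed

lemma mu_eq: "mu t u v = 3/2 - 2*t*y0* v - t*(u^2+v^2) + t*(t+1)/2*(u^2 + 3* v^2)"
proof -
  have "mu t u v = 3/2 - 2*t*y0* v - t*(u^2+v^2) + t*(t+1)/2*(u^2 + 4*y0^2* v^2)"
    unfolding mu_def cf_def by (simp add: field_simps power2_eq_square)
  then show ?thesis using y0_sq by simp
qed

lemma y0_ge: "y0 \<ge> 1/2"
proof -
  have "sqrt 1 \<le> sqrt 3" by (rule real_sqrt_le_mono) simp
  then show ?thesis by (simp add: y0_def)
qed

definition Zf :: "real \<Rightarrow> real \<Rightarrow> real \<Rightarrow> real" where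
  "Zf t x y = infsum (\<lambda>(m,n). ((real_of_int m + x * real_of_int n)^2 / y + y * (real_of_int n)^2) powr (- t)) Zstar"

lemma Q_eq:
  assumes "y0 + v > 0"
  shows "(real_of_int m + (1/2 + u) * real_of_int n)^2 / (y0 + v) + (y0 + v) * (real_of_int n)^2
         = PP u v m n / (y0 + v)"
  using assms unfolding PP_def al_def by (simp add: field_simps power2_eq_square)

lemma Q_powr:
  assumes "y0 + v > 0" "PP u v m n > 0"
  shows "((real_of_int m + (1/2 + u) * real_of_int n)^2 / (y0 + v) + (y0 + v) * (real_of_int n)^2) powr (- t)
         = (y0 + v) powr t * PP u v m n powr (- t)"
proof -
  have "(PP u v m n / (y0 + v)) powr (- t) = PP u v m n powr (- t) / (y0 + v) powr (- t)"
    using assms by (intro powr_divide)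
  also have "\<dots> = (y0 + v) powr t * PP u v m n powr (- t)"
    using assms by (simp add: powr_minus field_simps)
  finally show ?thesis using Q_eq[OF assms(1)] by simp
qed

lemma D3_bound:
  fixes t u v :: real
  assumes t: "t > 1" and r: "\<bar>u\<bar> + \<bar>v\<bar> \<le> 1"
  defines "w \<equiv> v / y0"
  shows "\<bar>(1 + t* w + t*(t-1)/2* w^2) * mu t u v - (3/2 + t*(t-1)/2*(u^2+v^2))\<bar>
         \<le> (2*t*(t + 3*t*(t+1)/2) + 2*t*(t-1)*(2*t + (t + 3*t*(t+1)/2))) * (\<bar>u\<bar> + \<bar>v\<bar>)^3"
proof -
  define r1 where "r1 = \<bar>u\<bar> + \<bar>v\<bar>"
  define m1 where "m1 = - 2*t*y0* v"
  define m2 where "m2 = - t*(u^2+v^2) + t*(t+1)/2*(u^2 + 3 * v^2)"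
  define c2 where "c2 = t + 3*t*(t+1)/2"
  have r10: "0 \<le> r1" "r1 \<le> 1" using r unfolding r1_def by auto
  have mu: "mu t u v = 3/2 + m1 + m2" unfolding m1_def m2_def mu_eq by simp
  have wy: "w * y0 = v" unfolding w_def using y0_pos by simp
  have w2: "w^2 = 4/3 * v^2" unfolding w_def power_divide y0_sq by simp
  have w1: "w = 4/3 * y0 * v" unfolding w_def using y0_sq y0_pos
    by (simp add: field_simps power2_eq_square)
  have e1: "m1 + 3/2*t* w = 0" unfolding m1_def w1 by (simp add: algebra_simps)
  have twm1: "t* w*m1 = -2*t^2* v^2" unfolding m1_def using wy
    by (simp add: algebra_simps power2_eq_square)
  have e2: "m2 + t* w*m1 + 3/4*t*(t-1)* w^2 = t*(t-1)/2*(u^2+v^2)"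
    unfolding twm1 w2 m2_def by (simp add: field_simps power2_eq_square)
  have expand: "(1 + t* w + t*(t-1)/2* w^2) * (3/2 + m1 + m2)
     = 3/2 + (m1 + 3/2*t* w) + (m2 + t* w*m1 + 3/4*t*(t-1)* w^2) + t* w*m2 + t*(t-1)/2* w^2*(m1+m2)"
    by algebra
  have D: "(1 + t* w + t*(t-1)/2* w^2) * mu t u v - (3/2 + t*(t-1)/2*(u^2+v^2))
      = t* w*m2 + t*(t-1)/2* w^2*(m1+m2)"
    unfolding mu expand e1 e2 by simp
  have vr: "\<bar>v\<bar> \<le> r1" "\<bar>u\<bar> \<le> r1" unfolding r1_def by auto
  have hw: "\<bar>w\<bar> \<le> 2 * r1"
  proof -
    have "\<bar>w\<bar> = \<bar>v\<bar> / y0" unfolding w_def using y0_pos by simp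
    also have "\<dots> \<le> \<bar>v\<bar> / (1/2)" by (intro divide_left_mono y0_ge) (use y0_pos in auto)
    finally show ?thesis using vr by simp
  qed
  have "r1^2 = u^2 + v^2 + 2*(\<bar>u\<bar>*\<bar>v\<bar>)" unfolding r1_def by (simp add: power2_sum power2_abs)
  moreover have "0 \<le> \<bar>u\<bar>*\<bar>v\<bar>" by simp
  ultimately have r2: "u^2 + v^2 \<le> r1^2" by linarith
  have r2': "u^2 + 3 * v^2 \<le> 3 * r1^2" using r2 zero_le_power2[of u] zero_le_power2[of v] by linarith
  have hm2: "\<bar>m2\<bar> \<le> c2 * r1^2"
  proof -
    have "\<bar>m2\<bar> \<le> t*(u^2+v^2) + t*(t+1)/2*(u^2 + 3 * v^2)"
    proof -
      have A: "0 \<le> t*(u^2+v^2)" using t by simp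
      have B: "0 \<le> t*(t+1)/2*(u^2 + 3 * v^2)" using t by simp
      show ?thesis unfolding m2_def abs_le_iff using A B by linarith
    qed
    also have "\<dots> \<le> t*r1^2 + t*(t+1)/2*(3 * r1^2)"
      using t r2 r2' by (intro add_mono mult_left_mono) auto
    finally show ?thesis unfolding c2_def by (simp add: algebra_simps)
  qed
  have hm1: "\<bar>m1\<bar> \<le> 2*t*r1"
  proof -
    have "\<bar>m1\<bar> = 2*t*y0*\<bar>v\<bar>" unfolding m1_def using t y0_pos by (simp add: abs_mult)
    also have "\<dots> \<le> 2*t*1*r1" using t y0_le1 y0_pos vr by (intro mult_mono) auto
    finally show ?thesis by simp
  qed
  have c20: "c2 \<ge> 0" unfolding c2_def using t by simp
  have r1sq: "r1^2 \<le> r1" using r10 mult_left_le[of r1 r1] by (simp add: power2_eq_square)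
  have hm12: "\<bar>m1 + m2\<bar> \<le> (2*t + c2) * r1"
  proof -
    have "c2 * r1^2 \<le> c2 * r1" using c20 r1sq by (rule mult_left_mono[rotated])
    moreover have "\<bar>m1 + m2\<bar> \<le> \<bar>m1\<bar> + \<bar>m2\<bar>" by (rule abs_triangle_ineq)
    ultimately have "\<bar>m1 + m2\<bar> \<le> 2*t*r1 + c2 * r1" using hm1 hm2 by linarith
    then show ?thesis by (simp add: algebra_simps)
  qed
  have "\<bar>t* w*m2\<bar> \<le> t*(2*r1)*(c2*r1^2)"
    unfolding abs_mult using t hw hm2 by (intro mult_mono) auto
  moreover have "\<bar>t*(t-1)/2* w^2*(m1+m2)\<bar> \<le> t*(t-1)/2*(4*r1^2)*((2*t + c2) * r1)"
  proof -
    have "\<bar>w\<bar>^2 \<le> (2*r1)^2" using hw by (intro power_mono) auto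
    then have "\<bar>w^2\<bar> \<le> 4*r1^2" by (simp add: power_mult_distrib)
    then show ?thesis unfolding abs_mult using t hm12 c20 r10
      by (intro mult_mono) (auto simp: mult_nonneg_nonneg)
  qed
  ultimately have "\<bar>t* w*m2 + t*(t-1)/2* w^2*(m1+m2)\<bar> \<le> t*(2*r1)*(c2*r1^2) + t*(t-1)/2*(4*r1^2)*((2*t + c2) * r1)"
    using abs_triangle_ineq[of "t* w*m2" "t*(t-1)/2* w^2*(m1+m2)"] by linarith
  also have "\<dots> = (2*t*c2 + 2*t*(t-1)*(2*t + c2)) * r1^3" by (simp add: field_simps power2_eq_square power3_eq_cube)
  finally show ?thesis unfolding D r1_def[symmetric] c2_def .
qed

lemma PP_pos: "\<bar>u\<bar> + \<bar>v\<bar> \<le> 1/12 \<Longrightarrow> (m,n) \<in> Zstar \<Longrightarrow> PP u v m n > 0"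
proof -
  assume r: "\<bar>u\<bar> + \<bar>v\<bar> \<le> 1/12" and z: "(m,n) \<in> Zstar"
  define r1 where "r1 = \<bar>u\<bar> + \<bar>v\<bar>"
  have q: "qq m n > 0" using qq_pos[OF z] .
  have r10: "0 \<le> r1" "r1 \<le> 1/12" using r unfolding r1_def by auto
  have a: "\<bar>PP1 u v m n\<bar> \<le> qq m n * (4 * r1)" using PP1_le[OF z, of u v] unfolding r1_def by (simp add: mult_ac)
  have "r1^2 \<le> r1" using r10 mult_left_le[of r1 r1] by (simp add: power2_eq_square)
  then have "2 * qq m n * r1^2 \<le> 2 * qq m n * r1" using q by (intro mult_left_mono) auto
  then have "\<bar>PP2 u v m n\<bar> \<le> qq m n * (2 * r1)" using PP2_le[OF z, of u v] unfolding r1_def[symmetric]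
    by (simp add: mult_ac)
  moreover have "qq m n * (4 * r1) + qq m n * (2 * r1) \<le> qq m n * (1/2)"
    using q r10 by (simp add: distrib_left[symmetric] mult_left_mono)
  ultimately show ?thesis unfolding PP_eq using a q by linarith
qed

lemma mu_bound:
  assumes t: "t > 1" and r: "\<bar>u\<bar> + \<bar>v\<bar> \<le> 1"
  shows "\<bar>mu t u v\<bar> \<le> 3/2 + 4*t + 2*t*(t+1)"
proof -
  have u1: "\<bar>u\<bar> \<le> 1" and v1: "\<bar>v\<bar> \<le> 1" using r by auto
  have "\<bar>u\<bar>^2 \<le> 1^2" using u1 by (intro power_mono) auto
  then have u2: "u^2 \<le> 1" by simp
  have "\<bar>v\<bar>^2 \<le> 1^2" using v1 by (intro power_mono) auto
  then have v2: "v^2 \<le> 1" by simp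
  have a: "\<bar>2*t*y0* v\<bar> \<le> 2*t"
  proof -
    have "\<bar>2*t*y0* v\<bar> = 2*t*(y0*\<bar>v\<bar>)" using t y0_pos by (simp add: abs_mult)
    also have "y0*\<bar>v\<bar> \<le> 1*1" using y0_le1 y0_pos v1 by (intro mult_mono) auto
    finally show ?thesis using t by simp
  qed
  have b: "0 \<le> t*(u^2+v^2)" "t*(u^2+v^2) \<le> t*2" using t u2 v2 by auto
  have c: "0 \<le> t*(t+1)/2*(u^2 + 3 * v^2)" using t by simp
  have c2: "t*(t+1)/2*(u^2 + 3 * v^2) \<le> t*(t+1)/2*4"
    by (intro mult_left_mono) (use t u2 v2 in auto)
  have c3: "t*(t+1)/2*4 = 2*t*(t+1)" by simp
  have a': "2*t*y0* v \<le> 2*t" "- (2*t*y0* v) \<le> 2*t" using a unfolding abs_le_iff by auto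
  have "mu t u v \<le> 3/2 + 4*t + 2*t*(t+1)" "- mu t u v \<le> 3/2 + 4*t + 2*t*(t+1)"
    unfolding mu_eq using a' b c c2 c3 t by linarith+
  then show ?thesis unfolding abs_le_iff by simp
qed

definition Qt :: "real \<Rightarrow> real \<Rightarrow> real \<Rightarrow> int \<times> int \<Rightarrow> real" where
  "Qt t x y = (\<lambda>(m,n). ((real_of_int m + x * real_of_int n)^2 / y + y * (real_of_int n)^2) powr (- t))"

lemma Zf_Qt: "Zf t x y = infsum (Qt t x y) Zstar" unfolding Zf_def Qt_def by simp

lemma Z_expansion:
  fixes t :: real
  assumes t: "t > 1"
  obtains CZ where "CZ \<ge> 0" "\<And>u v. \<bar>u\<bar> + \<bar>v\<bar> \<le> 1/12 \<Longrightarrow>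
      Qt t (1/2 + u) (y0 + v) summable_on Zstar \<and>
      \<bar>Zf t (1/2 + u) (y0 + v) - y0 powr t * infsum (mom (t+2) 4 0) Zstar * (3/2 + t*(t-1)/2*(u^2+v^2))\<bar>
        \<le> CZ * (\<bar>u\<bar> + \<bar>v\<bar>)^3"
proof -
  define a where "a = infsum (mom (t+2) 4 0) Zstar"
  obtain C where C0: "C \<ge> 0" and C: "\<And>u v. \<bar>u\<bar> + \<bar>v\<bar> \<le> 1/12 \<Longrightarrow>
      (\<lambda>(m,n). PP u v m n powr (- t)) summable_on Zstar \<and>
      \<bar>SS t u v - infsum (mom (t+2) 4 0) Zstar * mu t u v\<bar> \<le> C * (\<bar>u\<bar> + \<bar>v\<bar>)^3"
    by (rule S_expansion[OF t]) blast
  obtain KG where KG0: "KG \<ge> 0" and KG: "\<And>e. \<bar>e\<bar> \<le> 1/2 \<Longrightarrow>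
      \<bar>(1 + e) powr t - (1 + t * e + t * (t - 1) / 2 * e^2)\<bar> \<le> KG * \<bar>e\<bar>^3"
    by (rule taylor_powr) blast
  define CD where "CD = (2*t*(t + 3*t*(t+1)/2) + 2*t*(t-1)*(2*t + (t + 3*t*(t+1)/2)))"
  define BG where "BG = 1 + t + t*(t-1)/2"
  define Bm where "Bm = 3/2 + 4*t + 2*t*(t+1)"
  define CZ where "CZ = y0 powr t * (\<bar>a\<bar> * CD + BG * C + 8 * KG * (\<bar>a\<bar> * Bm + C))"
  have CD0: "CD \<ge> 0" unfolding CD_def using t by simp
  have BG0: "BG \<ge> 0" unfolding BG_def using t by simp
  have Bm0: "Bm \<ge> 0" unfolding Bm_def using t by simp
  have CZ0: "CZ \<ge> 0" unfolding CZ_def using CD0 BG0 Bm0 C0 KG0 by simp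
  have main: "Qt t (1/2 + u) (y0 + v) summable_on Zstar \<and>
      \<bar>Zf t (1/2 + u) (y0 + v) - y0 powr t * a * (3/2 + t*(t-1)/2*(u^2+v^2))\<bar> \<le> CZ * (\<bar>u\<bar> + \<bar>v\<bar>)^3"
    if r: "\<bar>u\<bar> + \<bar>v\<bar> \<le> 1/12" for u v
  proof -
    define r1 where "r1 = \<bar>u\<bar> + \<bar>v\<bar>"
    define w where "w = v / y0"
    define Y where "Y = y0 + v"
    have r10: "0 \<le> r1" "r1 \<le> 1/12" using r unfolding r1_def by auto
    have vr: "\<bar>v\<bar> \<le> r1" unfolding r1_def by simp
    have Ypos: "Y > 0" unfolding Y_def using y0_ge vr r10 by linarith
    have hw: "\<bar>w\<bar> \<le> 2 * r1"
    proof -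
      have "\<bar>w\<bar> = \<bar>v\<bar> / y0" unfolding w_def using y0_pos by simp
      also have "\<dots> \<le> \<bar>v\<bar> / (1/2)" by (intro divide_left_mono y0_ge) (use y0_pos in auto)
      finally show ?thesis using vr by simp
    qed
    have hw1: "\<bar>w\<bar> \<le> 1/2" using hw r10 by linarith
    have Cuv: "(\<lambda>(m,n). PP u v m n powr (- t)) summable_on Zstar"
       "\<bar>SS t u v - a * mu t u v\<bar> \<le> C * r1^3" using C[OF r] unfolding a_def r1_def by auto
    define PPf where "PPf = (\<lambda>(m,n). PP u v m n powr (- t))"
    have Qx: "Qt t (1/2 + u) (y0 + v) x = Y powr t * PPf x" if xz: "x \<in> Zstar" for x
    proof -
      obtain m n where x: "x = (m,n)" "(m,n) \<in> Zstar" using xz by (cases x) auto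
      show ?thesis using Q_powr[of v u m n t] PP_pos[OF r x(2)] Ypos unfolding Qt_def Y_def PPf_def x(1) by simp
    qed
    have PPs: "PPf summable_on Zstar" using Cuv(1) unfolding PPf_def .
    have "Qt t (1/2 + u) (y0 + v) summable_on Zstar \<longleftrightarrow> (\<lambda>x. Y powr t * PPf x) summable_on Zstar"
      by (rule summable_on_cong) (rule Qx)
    then have Qs: "Qt t (1/2 + u) (y0 + v) summable_on Zstar"
      using summable_on_cmult_right[OF PPs, of "Y powr t"] by simp
    have Zeq: "Zf t (1/2 + u) (y0 + v) = Y powr t * SS t u v"
    proof -
      have "Zf t (1/2 + u) (y0 + v) = infsum (\<lambda>x. Y powr t * PPf x) Zstar"
        unfolding Zf_Qt by (rule infsum_cong) (rule Qx)
      also have "\<dots> = Y powr t * SS t u v" unfolding SS_def PPf_def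
        by (rule infsum_cmult_right) (use PPs in \<open>simp add: PPf_def\<close>)
      finally show ?thesis .
    qed
    have Yw: "Y = y0 * (1 + w)" unfolding Y_def w_def using y0_pos by (simp add: field_simps)
    have Gpos: "1 + w > 0" using hw1 by linarith
    have Ypow: "Y powr t = y0 powr t * (1 + w) powr t" unfolding Yw using y0_pos Gpos by (simp add: powr_mult)
    define Gm where "Gm = 1 + t * w + t * (t - 1) / 2 * w^2"
    define RG where "RG = (1 + w) powr t - Gm"
    define RS where "RS = SS t u v - a * mu t u v"
    define M where "M = 3/2 + t*(t-1)/2*(u^2+v^2)"
    have hRG: "\<bar>RG\<bar> \<le> 8 * KG * r1^3"
    proof -
      have "\<bar>RG\<bar> \<le> KG * \<bar>w\<bar>^3" using KG[OF hw1] unfolding RG_def Gm_def .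
      also have "\<bar>w\<bar>^3 \<le> (2*r1)^3" using hw by (intro power_mono) auto
      then have "KG * \<bar>w\<bar>^3 \<le> KG * (2*r1)^3" using KG0 by (intro mult_left_mono)
      finally show ?thesis by (simp add: power_mult_distrib)
    qed
    have hRS: "\<bar>RS\<bar> \<le> C * r1^3" using Cuv(2) unfolding RS_def .
    have r13: "r1^3 \<le> 1" using r10 by (simp add: power_le_one)
    have hD: "\<bar>Gm * mu t u v - M\<bar> \<le> CD * r1^3"
      using D3_bound[OF t, of u v] r unfolding Gm_def M_def CD_def w_def r1_def by simp
    have hGm: "\<bar>Gm\<bar> \<le> BG"
    proof -
      have w1: "\<bar>w\<bar> \<le> 1" using hw1 by simp
      have "\<bar>w\<bar>^2 \<le> 1^2" using w1 by (intro power_mono) auto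
      then have w2: "w^2 \<le> 1" by simp
      have "\<bar>Gm\<bar> \<le> 1 + \<bar>t * w\<bar> + \<bar>t * (t - 1) / 2 * w^2\<bar>" unfolding Gm_def
        using abs_triangle_ineq[of "1 + t * w" "t * (t - 1) / 2 * w^2"] abs_triangle_ineq[of 1 "t * w"] by simp
      also have "\<bar>t * w\<bar> \<le> t" using t w1 by (simp add: abs_mult mult_left_le)
      also have "\<bar>t * (t - 1) / 2 * w^2\<bar> = t * (t - 1) / 2 * w^2" using t by (simp add: abs_mult)
      also have "\<dots> \<le> t * (t - 1) / 2" using t w2 by (simp add: mult_left_le)
      finally show ?thesis unfolding BG_def by simp
    qed
    have hmu: "\<bar>mu t u v\<bar> \<le> Bm" unfolding Bm_def using mu_bound[OF t] r by simp
    have hSS: "\<bar>SS t u v\<bar> \<le> \<bar>a\<bar> * Bm + C"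
    proof -
      have "SS t u v = a * mu t u v + RS" unfolding RS_def by simp
      then have "\<bar>SS t u v\<bar> \<le> \<bar>a\<bar> * \<bar>mu t u v\<bar> + \<bar>RS\<bar>"
        using abs_triangle_ineq[of "a * mu t u v" RS] by (simp add: abs_mult)
      also have "\<dots> \<le> \<bar>a\<bar> * Bm + C * 1"
      proof (intro add_mono mult_left_mono)
        show "\<bar>mu t u v\<bar> \<le> Bm" by (rule hmu)
        have "C * r1^3 \<le> C * 1" using r13 C0 by (intro mult_left_mono)
        then show "\<bar>RS\<bar> \<le> C * 1" using hRS by linarith
      qed simp
      finally show ?thesis by simp
    qed
    have key: "(1 + w) powr t * SS t u v - a * M = a * (Gm * mu t u v - M) + Gm * RS + RG * SS t u v"
      unfolding RG_def RS_def by (simp add: algebra_simps)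
    have "\<bar>(1 + w) powr t * SS t u v - a * M\<bar> \<le> \<bar>a\<bar> * \<bar>Gm * mu t u v - M\<bar> + \<bar>Gm\<bar> * \<bar>RS\<bar> + \<bar>RG\<bar> * \<bar>SS t u v\<bar>"
      unfolding key using abs_triangle_ineq[of "a * (Gm * mu t u v - M) + Gm * RS" "RG * SS t u v"]
        abs_triangle_ineq[of "a * (Gm * mu t u v - M)" "Gm * RS"] by (simp add: abs_mult)
    also have "\<dots> \<le> \<bar>a\<bar> * (CD * r1^3) + BG * (C * r1^3) + (8 * KG * r1^3) * (\<bar>a\<bar> * Bm + C)"
      using hD hGm hRS hRG hSS BG0 by (intro add_mono mult_mono) auto
    also have "\<dots> = (\<bar>a\<bar> * CD + BG * C + 8 * KG * (\<bar>a\<bar> * Bm + C)) * r1^3" by (simp add: algebra_simps)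
    finally have F: "\<bar>(1 + w) powr t * SS t u v - a * M\<bar> \<le> (\<bar>a\<bar> * CD + BG * C + 8 * KG * (\<bar>a\<bar> * Bm + C)) * r1^3" .
    have "Zf t (1/2 + u) (y0 + v) - y0 powr t * a * M = y0 powr t * ((1 + w) powr t * SS t u v - a * M)"
      unfolding Zeq Ypow by (simp add: algebra_simps)
    then have "\<bar>Zf t (1/2 + u) (y0 + v) - y0 powr t * a * M\<bar> = y0 powr t * \<bar>(1 + w) powr t * SS t u v - a * M\<bar>"
      by (simp add: abs_mult)
    also have "\<dots> \<le> y0 powr t * ((\<bar>a\<bar> * CD + BG * C + 8 * KG * (\<bar>a\<bar> * Bm + C)) * r1^3)"
      by (intro mult_left_mono F) simp
    finally show ?thesis using Qs unfolding CZ_def M_def r1_def by (simp add: mult.assoc)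
  qed
  show ?thesis by (rule that[OF CZ0 main[unfolded a_def]])
qed

lemma V_term:
  assumes A: "A > 0" and Q: "Q \<ge> 0"
  shows "V_LJ a1 a2 t1 t2 (A * Q) = a2 * A powr (- t2) * Q powr (- t2) - a1 * A powr (- t1) * Q powr (- t1)"
proof -
  have "\<And>t. 1 / (A * Q) powr t = A powr (- t) * Q powr (- t)"
    using A Q by (simp add: powr_mult powr_minus divide_inverse)
  then show ?thesis unfolding V_LJ_def by (simp add: divide_inverse mult.assoc)
qed

lemma E_decomp:
  assumes A: "A > 0" and y: "y > 0"
    and s1: "Qt t1 x y summable_on Zstar" and s2: "Qt t2 x y summable_on Zstar"
  shows "E_lat (V_LJ a1 a2 t1 t2) x y A = a2 * A powr (- t2) * Zf t2 x y - a1 * A powr (- t1) * Zf t1 x y"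
proof -
  have "E_lat (V_LJ a1 a2 t1 t2) x y A
      = infsum (\<lambda>p. (a2 * A powr (- t2)) * Qt t2 x y p + (- (a1 * A powr (- t1))) * Qt t1 x y p) Zstar"
    unfolding E_lat_def
  proof (rule infsum_cong)
    fix p :: "int \<times> int" assume "p \<in> Zstar"
    obtain m n where p: "p = (m,n)" by (cases p)
    have Qn: "(real_of_int m + x * real_of_int n)^2 / y + y * (real_of_int n)^2 \<ge> 0" using y by simp
    show "(case p of (m, n) \<Rightarrow> V_LJ a1 a2 t1 t2 (A * ((real_of_int m + x * real_of_int n)\<^sup>2 / y + y * (real_of_int n)\<^sup>2)))
        = (a2 * A powr (- t2)) * Qt t2 x y p + (- (a1 * A powr (- t1))) * Qt t1 x y p"
      unfolding p Qt_def using V_term[OF A Qn, of a1 a2 t1 t2] by simp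
  qed
  also have "\<dots> = (a2 * A powr (- t2)) * infsum (Qt t2 x y) Zstar + (- (a1 * A powr (- t1))) * infsum (Qt t1 x y) Zstar"
  proof -
    have "infsum (\<lambda>p. (a2 * A powr (- t2)) * Qt t2 x y p + (- (a1 * A powr (- t1))) * Qt t1 x y p) Zstar
        = infsum (\<lambda>p. (a2 * A powr (- t2)) * Qt t2 x y p) Zstar + infsum (\<lambda>p. (- (a1 * A powr (- t1))) * Qt t1 x y p) Zstar"
      by (rule infsum_add[OF summable_on_cmult_right[OF s2] summable_on_cmult_right[OF s1]])
    also have "\<dots> = (a2 * A powr (- t2)) * infsum (Qt t2 x y) Zstar + (- (a1 * A powr (- t1))) * infsum (Qt t1 x y) Zstar"
      by (simp only: infsum_cmult_right[OF s2] infsum_cmult_right[OF s1])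
    finally show ?thesis .
  qed
  finally show ?thesis unfolding Zf_Qt by simp
qed

lemma F_expansion:
  assumes a1: "a1 > 0" and a2: "a2 > 0" and t1: "t1 > 1" and t2: "t2 > 1" and A: "A > 0"
  defines "D \<equiv> a2 * A powr (- t2) * (y0 powr t2 * infsum (mom (t2+2) 4 0) Zstar * (t2*(t2-1)/2))
             - a1 * A powr (- t1) * (y0 powr t1 * infsum (mom (t1+2) 4 0) Zstar * (t1*(t1-1)/2))"
  obtains K where "K \<ge> 0" "\<And>u v. \<bar>u\<bar> + \<bar>v\<bar> \<le> 1/12 \<Longrightarrow>
     \<bar>E_lat (V_LJ a1 a2 t1 t2) (1/2 + u) (y0 + v) A - E_lat (V_LJ a1 a2 t1 t2) (1/2) y0 A - D * (u^2 + v^2)\<bar>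
       \<le> K * (\<bar>u\<bar> + \<bar>v\<bar>)^3"
proof -
  obtain C1 where C10: "C1 \<ge> 0" and C1: "\<And>u v. \<bar>u\<bar> + \<bar>v\<bar> \<le> 1/12 \<Longrightarrow>
      Qt t1 (1/2 + u) (y0 + v) summable_on Zstar \<and>
      \<bar>Zf t1 (1/2 + u) (y0 + v) - y0 powr t1 * infsum (mom (t1+2) 4 0) Zstar * (3/2 + t1*(t1-1)/2*(u^2+v^2))\<bar>
        \<le> C1 * (\<bar>u\<bar> + \<bar>v\<bar>)^3"
    by (rule Z_expansion[OF t1]) blast
  obtain C2 where C20: "C2 \<ge> 0" and C2: "\<And>u v. \<bar>u\<bar> + \<bar>v\<bar> \<le> 1/12 \<Longrightarrow>
      Qt t2 (1/2 + u) (y0 + v) summable_on Zstar \<and>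
      \<bar>Zf t2 (1/2 + u) (y0 + v) - y0 powr t2 * infsum (mom (t2+2) 4 0) Zstar * (3/2 + t2*(t2-1)/2*(u^2+v^2))\<bar>
        \<le> C2 * (\<bar>u\<bar> + \<bar>v\<bar>)^3"
    by (rule Z_expansion[OF t2]) blast
  define b1 where "b1 = a1 * A powr (- t1)"
  define b2 where "b2 = a2 * A powr (- t2)"
  have b10: "b1 > 0" "b2 > 0" unfolding b1_def b2_def using a1 a2 A by auto
  define K where "K = b2 * C2 + b1 * C1"
  have K0: "K \<ge> 0" unfolding K_def using b10 C10 C20 by simp
  define s1 s2 where "s1 = infsum (mom (t1+2) 4 0) Zstar" and "s2 = infsum (mom (t2+2) 4 0) Zstar"
  have Ypos: "y0 + v > 0" if "\<bar>u\<bar> + \<bar>v\<bar> \<le> 1/12" for u v :: real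
    using that y0_ge by linarith
  have Eexp: "E_lat (V_LJ a1 a2 t1 t2) (1/2 + u) (y0 + v) A = b2 * Zf t2 (1/2 + u) (y0 + v) - b1 * Zf t1 (1/2 + u) (y0 + v)"
    if r: "\<bar>u\<bar> + \<bar>v\<bar> \<le> 1/12" for u v
    unfolding b1_def b2_def using E_decomp[OF A Ypos[OF r]] C1[OF r] C2[OF r] by blast
  have z: "\<bar>0::real\<bar> + \<bar>0::real\<bar> \<le> 1/12" by simp
  have Z10: "Zf t1 (1/2) y0 = y0 powr t1 * s1 * (3/2)" using C1[OF z] unfolding s1_def by simp
  have Z20: "Zf t2 (1/2) y0 = y0 powr t2 * s2 * (3/2)" using C2[OF z] unfolding s2_def by simp
  have E0: "E_lat (V_LJ a1 a2 t1 t2) (1/2) y0 A = b2 * (y0 powr t2 * s2 * (3/2)) - b1 * (y0 powr t1 * s1 * (3/2))"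
    using Eexp[OF z] Z10 Z20 by simp
  have main: "\<bar>E_lat (V_LJ a1 a2 t1 t2) (1/2 + u) (y0 + v) A - E_lat (V_LJ a1 a2 t1 t2) (1/2) y0 A - D * (u^2 + v^2)\<bar>
       \<le> K * (\<bar>u\<bar> + \<bar>v\<bar>)^3" if r: "\<bar>u\<bar> + \<bar>v\<bar> \<le> 1/12" for u v
  proof -
    define e1 where "e1 = Zf t1 (1/2 + u) (y0 + v) - y0 powr t1 * s1 * (3/2 + t1*(t1-1)/2*(u^2+v^2))"
    define e2 where "e2 = Zf t2 (1/2 + u) (y0 + v) - y0 powr t2 * s2 * (3/2 + t2*(t2-1)/2*(u^2+v^2))"
    have he1: "\<bar>e1\<bar> \<le> C1 * (\<bar>u\<bar> + \<bar>v\<bar>)^3" using C1[OF r] unfolding e1_def s1_def by blast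
    have he2: "\<bar>e2\<bar> \<le> C2 * (\<bar>u\<bar> + \<bar>v\<bar>)^3" using C2[OF r] unfolding e2_def s2_def by blast
    have eq: "E_lat (V_LJ a1 a2 t1 t2) (1/2 + u) (y0 + v) A - E_lat (V_LJ a1 a2 t1 t2) (1/2) y0 A - D * (u^2 + v^2)
        = b2 * e2 - b1 * e1"
      unfolding Eexp[OF r] E0 e1_def e2_def D_def b1_def[symmetric] b2_def[symmetric] s1_def[symmetric] s2_def[symmetric]
      by (simp add: field_simps)
    have "\<bar>b2 * e2 - b1 * e1\<bar> \<le> b2 * \<bar>e2\<bar> + b1 * \<bar>e1\<bar>"
      using abs_triangle_ineq4[of "b2 * e2" "b1 * e1"] b10 by (simp add: abs_mult)
    also have "\<dots> \<le> b2 * (C2 * (\<bar>u\<bar> + \<bar>v\<bar>)^3) + b1 * (C1 * (\<bar>u\<bar> + \<bar>v\<bar>)^3)"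
      using he1 he2 b10 by (intro add_mono mult_left_mono) auto
    also have "\<dots> = K * (\<bar>u\<bar> + \<bar>v\<bar>)^3" unfolding K_def by (simp add: algebra_simps)
    finally show ?thesis unfolding eq .
  qed
  show ?thesis by (rule that[OF K0 main])
qed

lemma local_min_from_expansion:
  fixes F :: "real \<Rightarrow> real \<Rightarrow> real"
  assumes K0: "K \<ge> 0" and D: "D > 0"
    and H: "\<And>u v. \<bar>u\<bar> + \<bar>v\<bar> \<le> 1/12 \<Longrightarrow> \<bar>F (1/2 + u) (y0 + v) - F (1/2) y0 - D * (u^2 + v^2)\<bar> \<le> K * (\<bar>u\<bar> + \<bar>v\<bar>)^3"
  shows "strict_local_min2 F (1/2) (sqrt 3 / 2)"
proof -
  define \<delta> where "\<delta> = min (1/24) (D / (4*K+1))"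
  have d0: "\<delta> > 0" unfolding \<delta>_def using D K0 by simp
  have "F (1/2) y0 < F x y" if ne: "(x, y) \<noteq> (1/2, y0)" and dl: "dist (x, y) (1/2, y0) < \<delta>" for x y
  proof -
    define u v where "u = x - 1/2" and "v = y - y0"
    define r1 where "r1 = \<bar>u\<bar> + \<bar>v\<bar>"
    have "dist x (1/2) \<le> dist (x, y) (1/2, y0)" using dist_fst_le[of "(x,y)" "(1/2,y0)"] by simp
    then have hu: "\<bar>u\<bar> < \<delta>" using dl unfolding u_def v_def dist_real_def by simp
    have "dist y y0 \<le> dist (x, y) (1/2, y0)" using dist_snd_le[of "(x,y)" "(1/2,y0)"] by simp
    then have hv: "\<bar>v\<bar> < \<delta>" using dl unfolding u_def v_def dist_real_def by simp
    have r1d: "r1 \<le> 2 * \<delta>" unfolding r1_def using hu hv by simp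
    have r1s: "r1 \<le> 1/12" using r1d unfolding \<delta>_def by simp
    have r1p: "r1 > 0" unfolding r1_def using ne unfolding u_def v_def by auto
    have xy: "x = 1/2 + u" "y = y0 + v" unfolding u_def v_def by simp_all
    have B: "\<bar>F x y - F (1/2) y0 - D * (u^2 + v^2)\<bar> \<le> K * r1^3"
      using H[of u v] r1s unfolding xy r1_def by simp
    have r2: "r1^2 \<le> 2 * (u^2 + v^2)"
    proof -
      have "0 \<le> (\<bar>u\<bar> - \<bar>v\<bar>)^2" by simp
      then show ?thesis unfolding r1_def by (simp add: power2_eq_square algebra_simps)
    qed
    have Dr: "D * r1^2 / 2 \<le> D * (u^2 + v^2)" using r2 D by simp
    have Kr: "K * r1 < D / 2"
    proof -
      have "K * r1 \<le> K * (2 * \<delta>)" using K0 r1d by (intro mult_left_mono)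
      also have "\<dots> \<le> K * (2 * (D / (4*K+1)))" using K0 unfolding \<delta>_def by (intro mult_left_mono) auto
      also have "\<dots> < D / 2" using K0 D by (simp add: field_simps)
      finally show ?thesis .
    qed
    have "K * r1^3 = (K * r1) * r1^2" by (simp add: power2_eq_square power3_eq_cube)
    also have "\<dots> < (D/2) * r1^2" using Kr r1p by (intro mult_strict_right_mono) auto
    finally have "K * r1^3 < D * r1^2 / 2" by simp
    then show ?thesis using B Dr by linarith
  qed
  then show ?thesis unfolding strict_local_min2_def y0_def using d0 by blast
qed

lemma S1_pos:
  assumes s: "s > 3"
  shows "S1 s > 0"
proof -
  have sm: "mom s 4 0 summable_on Zstar" using mom_summable[OF s] by simp
  have "infsum (mom s 4 0) {(1,0)} \<le> infsum (mom s 4 0) Zstar"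
  proof (rule infsum_mono2)
    show "mom s 4 0 summable_on {(1, 0)}" by simp
    show "{(1::int, 0::int)} \<subseteq> Zstar" by (simp add: Zstar_def)
    fix x assume "x \<in> Zstar - {(1,0)}"
    then show "mom s 4 0 x \<ge> 0" by (cases x) (simp add: mom_def)
  qed (rule sm)
  moreover have "infsum (mom s 4 0) {(1,0)} = 1" by (simp add: mom_def qq_def)
  ultimately show ?thesis using S1_mom[of s] by simp
qed

lemma D_sign:
  fixes a1 a2 t1 t2 A :: real
  assumes a1: "a1 > 0" and a2: "a2 > 0" and t1: "1 < t1" and t12: "t1 < t2" and A: "A > 0"
  defines "A0 \<equiv> sqrt 3 / 2 *
      ((a2 * t2 * (t2 - 1) * S1 (t2 + 2)) / (a1 * t1 * (t1 - 1) * S1 (t1 + 2))) powr (1 / (t2 - t1))"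
  defines "D \<equiv> a2 * A powr (- t2) * (y0 powr t2 * infsum (mom (t2+2) 4 0) Zstar * (t2*(t2-1)/2))
             - a1 * A powr (- t1) * (y0 powr t1 * infsum (mom (t1+2) 4 0) Zstar * (t1*(t1-1)/2))"
  shows "(A < A0 \<longrightarrow> D > 0) \<and> (A > A0 \<longrightarrow> D < 0)"
proof -
  define X1 where "X1 = a1 * t1 * (t1 - 1) * S1 (t1 + 2)"
  define X2 where "X2 = a2 * t2 * (t2 - 1) * S1 (t2 + 2)"
  define d where "d = t2 - t1"
  define R where "R = X2 / X1"
  define r' where "r' = R powr (1 / d)"
  define c where "c = A / y0"
  have d0: "d > 0" unfolding d_def using t12 by simp
  have X10: "X1 > 0" unfolding X1_def using a1 t1 S1_pos[of "t1+2"] by simp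
  have X20: "X2 > 0" unfolding X2_def using a2 t1 t12 S1_pos[of "t2+2"] by simp
  have R0: "R > 0" unfolding R_def using X10 X20 by simp
  have c0: "c > 0" unfolding c_def using A y0_pos by simp
  have A0e: "A0 = y0 * r'" unfolding A0_def y0_def r'_def R_def X1_def X2_def d_def by simp
  have rd: "r' powr d = R" unfolding r'_def using R0 d0 by (simp add: powr_powr)
  have cp: "A powr (- t) * y0 powr t = c powr (- t)" for t
  proof -
    have "(A / y0) powr (- t) = A powr (- t) / y0 powr (- t)" using A y0_pos by (intro powr_divide)
    also have "\<dots> = A powr (- t) * y0 powr t" by (simp add: powr_minus divide_inverse)
    finally show ?thesis unfolding c_def by simp
  qed
  have De: "D = (X2 * c powr (- t2) - X1 * c powr (- t1)) / 2"
  proof -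
    have "D = (a2 * t2 * (t2 - 1) * infsum (mom (t2+2) 4 0) Zstar) * (A powr (- t2) * y0 powr t2) / 2
            - (a1 * t1 * (t1 - 1) * infsum (mom (t1+2) 4 0) Zstar) * (A powr (- t1) * y0 powr t1) / 2"
      unfolding D_def by (simp add: algebra_simps)
    then show ?thesis unfolding cp X1_def X2_def S1_mom by (simp add: field_simps)
  qed
  have ct1: "c powr (- t1) = c powr (- t2) * c powr d"
    unfolding d_def using c0 by (simp add: powr_add[symmetric])
  have De2: "D = c powr (- t2) / 2 * (X2 - X1 * c powr d)"
    unfolding De ct1 by (simp add: algebra_simps)
  have cpos: "c powr (- t2) > 0" using c0 by simp
  have lt: "D > 0" if "A < A0"
  proof -
    have "c < r'" using that y0_pos unfolding A0e c_def by (simp add: field_simps)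
    then have "c powr d < r' powr d" using c0 d0 by (intro powr_less_mono2) auto
    then have "c powr d < R" using rd by simp
    then have "X1 * c powr d < X2" using X10 unfolding R_def by (simp add: field_simps)
    then show ?thesis unfolding De2 using cpos by simp
  qed
  have gt: "D < 0" if "A > A0"
  proof -
    have r'0: "r' \<ge> 0" unfolding r'_def by simp
    have "r' < c" using that y0_pos unfolding A0e c_def by (simp add: field_simps)
    then have "r' powr d < c powr d" using r'0 d0 by (intro powr_less_mono2) auto
    then have "R < c powr d" using rd by simp
    then have "X2 < X1 * c powr d" using X10 unfolding R_def by (simp add: field_simps)
    then show ?thesis unfolding De2 using cpos by (simp add: mult_pos_neg)
  qed
  show ?thesis using lt gt by blast
qed

theorem theorem4p2:
  fixes a1 a2 t1 t2 :: real
  assumes "a1 > 0" and "a2 > 0" and "1 < t1" and "t1 < t2"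
  defines "A0 \<equiv> sqrt 3 / 2 *
      ((a2 * t2 * (t2 - 1) * S1 (t2 + 2)) / (a1 * t1 * (t1 - 1) * S1 (t1 + 2))) powr (1 / (t2 - t1))"
  shows "(\<forall>A. 0 < A \<and> A < A0 \<longrightarrow>
            strict_local_min2 (\<lambda>x y. E_lat (V_LJ a1 a2 t1 t2) x y A) (1/2) (sqrt 3 / 2))
       \<and> (\<forall>A. A > A0 \<longrightarrow>
            strict_local_max2 (\<lambda>x y. E_lat (V_LJ a1 a2 t1 t2) x y A) (1/2) (sqrt 3 / 2))"
proof -
  note a1 = assms(1) and a2 = assms(2) and t1 = assms(3) and t12 = assms(4)
  have t2: "t2 > 1" using t1 t12 by simp
  have A0pos: "A0 \<ge> 0" unfolding A0_def by simp
  define DD where "DD = (\<lambda>A. a2 * A powr (- t2) * (y0 powr t2 * infsum (mom (t2+2) 4 0) Zstar * (t2*(t2-1)/2))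
             - a1 * A powr (- t1) * (y0 powr t1 * infsum (mom (t1+2) 4 0) Zstar * (t1*(t1-1)/2)))"
  have exp: "\<exists>K. K \<ge> 0 \<and> (\<forall>u v. \<bar>u\<bar> + \<bar>v\<bar> \<le> 1/12 \<longrightarrow>
     \<bar>E_lat (V_LJ a1 a2 t1 t2) (1/2 + u) (y0 + v) A - E_lat (V_LJ a1 a2 t1 t2) (1/2) y0 A - DD A * (u^2 + v^2)\<bar>
       \<le> K * (\<bar>u\<bar> + \<bar>v\<bar>)^3)" if A: "A > 0" for A
  proof -
    obtain K where "K \<ge> 0" "\<And>u v. \<bar>u\<bar> + \<bar>v\<bar> \<le> 1/12 \<Longrightarrow>
     \<bar>E_lat (V_LJ a1 a2 t1 t2) (1/2 + u) (y0 + v) A - E_lat (V_LJ a1 a2 t1 t2) (1/2) y0 A - DD A * (u^2 + v^2)\<bar>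
       \<le> K * (\<bar>u\<bar> + \<bar>v\<bar>)^3"
      unfolding DD_def by (rule F_expansion[OF a1 a2 t1 t2 A]) blast
    then show ?thesis by blast
  qed
  have sign: "(A < A0 \<longrightarrow> DD A > 0) \<and> (A > A0 \<longrightarrow> DD A < 0)" if A: "A > 0" for A
    unfolding A0_def DD_def by (rule D_sign[OF a1 a2 t1 t12 A])
  have P1: "strict_local_min2 (\<lambda>x y. E_lat (V_LJ a1 a2 t1 t2) x y A) (1/2) (sqrt 3 / 2)"
    if A: "0 < A" "A < A0" for A
  proof -
    obtain K where K0: "K \<ge> 0" and H: "\<And>u v. \<bar>u\<bar> + \<bar>v\<bar> \<le> 1/12 \<Longrightarrow>
     \<bar>E_lat (V_LJ a1 a2 t1 t2) (1/2 + u) (y0 + v) A - E_lat (V_LJ a1 a2 t1 t2) (1/2) y0 A - DD A * (u^2 + v^2)\<bar>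
       \<le> K * (\<bar>u\<bar> + \<bar>v\<bar>)^3" using exp[OF A(1)] by blast
    have D: "DD A > 0" using sign[OF A(1)] A(2) by blast
    show ?thesis by (rule local_min_from_expansion[OF K0 D H])
  qed
  have P2: "strict_local_max2 (\<lambda>x y. E_lat (V_LJ a1 a2 t1 t2) x y A) (1/2) (sqrt 3 / 2)"
    if A: "A > A0" for A
  proof -
    have A1: "A > 0" using A A0pos by simp
    obtain K where K0: "K \<ge> 0" and H: "\<And>u v. \<bar>u\<bar> + \<bar>v\<bar> \<le> 1/12 \<Longrightarrow>
     \<bar>E_lat (V_LJ a1 a2 t1 t2) (1/2 + u) (y0 + v) A - E_lat (V_LJ a1 a2 t1 t2) (1/2) y0 A - DD A * (u^2 + v^2)\<bar>
       \<le> K * (\<bar>u\<bar> + \<bar>v\<bar>)^3" using exp[OF A1] by blast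
    have D: "- DD A > 0" using sign[OF A1] A by simp
    have H': "\<bar>(- E_lat (V_LJ a1 a2 t1 t2) (1/2 + u) (y0 + v) A) - (- E_lat (V_LJ a1 a2 t1 t2) (1/2) y0 A) - (- DD A) * (u^2 + v^2)\<bar>
       \<le> K * (\<bar>u\<bar> + \<bar>v\<bar>)^3" if "\<bar>u\<bar> + \<bar>v\<bar> \<le> 1/12" for u v
    proof -
      have "\<bar>(- E_lat (V_LJ a1 a2 t1 t2) (1/2 + u) (y0 + v) A) - (- E_lat (V_LJ a1 a2 t1 t2) (1/2) y0 A) - (- DD A) * (u^2 + v^2)\<bar>
          = \<bar>E_lat (V_LJ a1 a2 t1 t2) (1/2 + u) (y0 + v) A - E_lat (V_LJ a1 a2 t1 t2) (1/2) y0 A - DD A * (u^2 + v^2)\<bar>"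
        by (simp add: abs_minus_commute algebra_simps)
      then show ?thesis using H[OF that] by simp
    qed
    have "strict_local_min2 (\<lambda>x y. - E_lat (V_LJ a1 a2 t1 t2) x y A) (1/2) (sqrt 3 / 2)"
      by (rule local_min_from_expansion[OF K0 D]) (rule H')
    then show ?thesis unfolding strict_local_min2_def strict_local_max2_def by simp
  qed
  show ?thesis using P1 P2 by blast
qed

end
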